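(* Let $\mathbb{S}\subseteq\mathbb{R}$ be an interval, let $\gamma>0$, let $Q:\mathbb{S}\to\mathbb{R}$ be differentiable with $q=Q'$, and let $$H(z)=\gamma\log\big(1+e^{Q(z)/\gamma}\big),\qquad p(z)=\frac{1}{1+e^{-Q(z)/\gamma}},$$ with $H$ twice continuously differentiable on $\mathbb{S}$. Then the scalar matching loss $\mathcal{L}_m(\hat s,s)=H(\hat s)-H(s)-(\hat s-s)H'(s)$ is convex in $\hat s$ over $\mathbb{S}$ (for all $s\in\mathbb{S}$) if and only if $$q'(z)+\frac{1}{\gamma}\,[1-p(z)]\,q^2(z)\ge0\quad\text{for all }z\in\mathbb{S}.$$
   Context: $H$ is the $\gamma$-regularized composite Softplus primitive; its derivative (the link) is $H'(z)=q(z)p(z)$. *)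

theory Defs
  imports "HOL-Analysis.Analysis"
begin

definition softplusH :: "real \<Rightarrow> (real \<Rightarrow> real) \<Rightarrow> real \<Rightarrow> real" where
  "softplusH \<gamma> Q z = \<gamma> * ln (1 + exp (Q z / \<gamma>))"

definition sigmoidP :: "real \<Rightarrow> (real \<Rightarrow> real) \<Rightarrow> real \<Rightarrow> real" where
  "sigmoidP \<gamma> Q z = 1 / (1 + exp (- Q z / \<gamma>))"

definition matching_loss :: "(real \<Rightarrow> real) \<Rightarrow> (real \<Rightarrow> real) \<Rightarrow> real \<Rightarrow> real \<Rightarrow> real" where
  "matching_loss H H' shat s = H shat - H s - (shat - s) * H' s"

end

theory Submission
  imports Defs
begin

lemma nontriv:
  fixes S :: "real set"
  assumes "is_interval S" "\<exists>a\<in>S. \<exists>b\<in>S. a < b" "z \<in> S"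
  shows "at z within S \<noteq> bot"
proof -
  obtain a b where ab: "a \<in> S" "b \<in> S" "a < b" using assms(2) by blast
  obtain w where w: "w \<in> S" "w \<noteq> z"
  proof (cases "a = z")
    case True then show ?thesis using that[of b] ab by simp
  next
    case False then show ?thesis using that[of a] ab by simp
  qed
  have sub: "{min z w..max z w} \<subseteq> S"
  proof
    fix x assume "x \<in> {min z w..max z w}"
    then have "min z w \<le> x" "x \<le> max z w" by auto
    moreover have "min z w \<in> S" "max z w \<in> S" using w(1) assms(3) by (simp_all add: min_def max_def)
    ultimately show "x \<in> S" using assms(1) unfolding is_interval_1 by blast
  qed
  have lt: "min z w < max z w" using w(2) by (simp add: min_def max_def)
  have "z \<in> {min z w..max z w}" by simp
  then have "z islimpt {min z w..max z w}" using islimpt_Icc[OF lt] by blast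
  then have "z islimpt S" using sub islimpt_subset by blast
  then show ?thesis using trivial_limit_within by blast
qed

lemma mvt_within:
  fixes f f' :: "real \<Rightarrow> real"
  assumes "a < b" "{a..b} \<subseteq> S"
    and d: "\<And>x. x \<in> S \<Longrightarrow> (f has_real_derivative f' x) (at x within S)"
  shows "\<exists>\<xi>. a < \<xi> \<and> \<xi> < b \<and> f b - f a = (b - a) * f' \<xi>"
proof -
  have dat: "(f has_real_derivative f' x) (at x)" if "a < x" "x < b" for x
  proof -
    have xs: "x \<in> S" "{a<..<b} \<subseteq> S" using that assms(2) by auto
    have "(f has_real_derivative f' x) (at x within {a<..<b})"
      using d[OF xs(1)] has_field_derivative_subset[OF _ xs(2)] by blast
    moreover have "at x within {a<..<b} = at x" using that by (intro at_within_open) auto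
    ultimately show ?thesis by simp
  qed
  have "continuous (at x within S) f" if "x \<in> S" for x
    using DERIV_continuous[OF d[OF that]] .
  then have "continuous_on S f" unfolding continuous_on_eq_continuous_within by blast
  then have "continuous_on {a..b} f" using assms(2) continuous_on_subset by blast
  moreover have "f differentiable (at x)" if "a < x" "x < b" for x
    unfolding real_differentiable_def using dat[OF that] by blast
  ultimately have "\<exists>l z. a < z \<and> z < b \<and> DERIV f z :> l \<and> f b - f a = (b - a) * l"
    by (rule MVT[OF assms(1)])
  then obtain l \<xi> where
    r: "a < \<xi>" "\<xi> < b" "DERIV f \<xi> :> l" "f b - f a = (b - a) * l"
    by blast
  have "l = f' \<xi>" using DERIV_unique[OF r(3) dat[OF r(1,2)]] .
  then show ?thesis using r by blast
qed
lemma ivl_sub: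
  fixes S :: "real set"
  assumes "is_interval S" "x \<in> S" "y \<in> S"
  shows "{x..y} \<subseteq> S"
proof
  fix w assume "w \<in> {x..y}"
  then have "x \<le> w" "w \<le> y" by auto
  then show "w \<in> S" using assms unfolding is_interval_1 by blast
qed

lemma conv_iff:
  fixes S :: "real set" and f f' f'' :: "real \<Rightarrow> real"
  assumes S: "is_interval S" "\<exists>a\<in>S. \<exists>b\<in>S. a < b"
    and d1: "\<And>x. x \<in> S \<Longrightarrow> (f has_real_derivative f' x) (at x within S)"
    and d2: "\<And>x. x \<in> S \<Longrightarrow> (f' has_real_derivative f'' x) (at x within S)"
  shows "convex_on S f \<longleftrightarrow> (\<forall>z\<in>S. f'' z \<ge> 0)"
proof
  assume cv: "convex_on S f"
  have mono: "f' x \<le> f' y" if xy: "x \<in> S" "y \<in> S" "x < y" for x y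
  proof -
    have sub: "{x<..<y} \<subseteq> S" using ivl_sub[OF S(1) xy(1,2)] by auto
    have nx: "at x within {x<..<y} \<noteq> bot"
      using islimpt_greaterThanLessThan1[OF xy(3)] trivial_limit_within by blast
    have ny: "at y within {x<..<y} \<noteq> bot"
      using islimpt_greaterThanLessThan2[OF xy(3)] trivial_limit_within by blast
    have dx: "((\<lambda>w. (f w - f x) / (w - x)) \<longlongrightarrow> f' x) (at x within {x<..<y})"
      using has_field_derivative_subset[OF d1[OF xy(1)] sub] has_field_derivative_iff by blast
    have dy: "((\<lambda>w. (f w - f y) / (w - y)) \<longlongrightarrow> f' y) (at y within {x<..<y})"
      using has_field_derivative_subset[OF d1[OF xy(2)] sub] has_field_derivative_iff by blast
    have "f' x \<le> (f x - f y) / (x - y)"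
    proof (rule tendsto_upperbound[OF dx _ nx])
      show "\<forall>\<^sub>F w in at x within {x<..<y}. (f w - f x) / (w - x) \<le> (f x - f y) / (x - y)"
        unfolding eventually_at_filter
      proof (intro always_eventually allI impI)
        fix w assume "w \<noteq> x" "w \<in> {x<..<y}"
        then have "(f x - f w) / (x - w) \<le> (f x - f y) / (x - y)"
          using convex_on_slope_le(1)[OF cv xy(1,2)] by auto
        moreover have "(f x - f w) / (x - w) = (f w - f x) / (w - x)"
          by (metis minus_diff_eq minus_divide_divide)
        ultimately show "(f w - f x) / (w - x) \<le> (f x - f y) / (x - y)" by simp
      qed
    qed
    also have "(f x - f y) / (x - y) \<le> f' y"
    proof (rule tendsto_lowerbound[OF dy _ ny])
      show "\<forall>\<^sub>F w in at y within {x<..<y}. (f x - f y) / (x - y) \<le> (f w - f y) / (w - y)"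
        unfolding eventually_at_filter
      proof (intro always_eventually allI impI)
        fix w assume "w \<noteq> y" "w \<in> {x<..<y}"
        then show "(f x - f y) / (x - y) \<le> (f w - f y) / (w - y)"
          using convex_on_slope_le(2)[OF cv xy(1,2), of w] by simp
      qed
    qed
    finally show ?thesis .
  qed
  show "\<forall>z\<in>S. f'' z \<ge> 0"
  proof
    fix z assume z: "z \<in> S"
    have lim: "((\<lambda>w. (f' w - f' z) / (w - z)) \<longlongrightarrow> f'' z) (at z within S)"
      using d2[OF z] has_field_derivative_iff by blast
    show "f'' z \<ge> 0"
    proof (rule tendsto_lowerbound[OF lim _ nontriv[OF S z]])
      show "\<forall>\<^sub>F w in at z within S. 0 \<le> (f' w - f' z) / (w - z)"
        unfolding eventually_at_filter
      proof (intro always_eventually allI impI)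
        fix w assume w: "w \<noteq> z" "w \<in> S"
        show "0 \<le> (f' w - f' z) / (w - z)"
        proof (cases "w < z")
          case True
          then have "f' w \<le> f' z" using mono w z by blast
          then show ?thesis using True by (simp add: divide_nonpos_neg)
        next
          case False
          then have "f' z \<le> f' w" using mono w z by auto
          then show ?thesis using False w(1) by simp
        qed
      qed
    qed
  qed
next
  assume pos: "\<forall>z\<in>S. f'' z \<ge> 0"
  have mono: "f' x \<le> f' y" if xy: "x \<in> S" "y \<in> S" "x < y" for x y
  proof -
    have sub: "{x..y} \<subseteq> S" using ivl_sub[OF S(1) xy(1,2)] .
    obtain \<xi> where "x < \<xi>" "\<xi> < y" "f' y - f' x = (y - x) * f'' \<xi>"
      using mvt_within[OF xy(3) sub d2] by blast
    moreover have "\<xi> \<in> {x..y}" using calculation by simp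
    moreover have "f'' \<xi> \<ge> 0" using pos sub calculation(4) by blast
    ultimately show ?thesis using xy(3) by (smt (verit) mult_nonneg_nonneg)
  qed
  show "convex_on S f"
  proof (rule convex_on_linorderI)
    show "convex S" using S(1) is_interval_convex by blast
  next
    fix t x y :: real
    assume t: "t > 0" "t < 1"
    assume xy: "x \<in> S" "y \<in> S" "x < y"
    define z where "z = (1 - t) * x + t * y"
    have ivl: "{x..y} \<subseteq> S" using ivl_sub[OF S(1) xy(1,2)] .
    from xy t have xz: "z > x" by (simp add: z_def algebra_simps)
    have "y - z = (1 - t) * (y - x)" by (simp add: z_def algebra_simps)
    also from xy t have "\<dots> > 0" by (intro mult_pos_pos) simp_all
    finally have yz: "z < y" by simp
    have i1: "{x..z} \<subseteq> S" "{z..y} \<subseteq> S" using ivl xz yz by auto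
    obtain \<xi> where \<xi>: "\<xi> > x" "\<xi> < z" "f z - f x = (z - x) * f' \<xi>"
      using mvt_within[OF xz i1(1) d1] by blast
    obtain \<eta> where \<eta>: "\<eta> > z" "\<eta> < y" "f y - f z = (y - z) * f' \<eta>"
      using mvt_within[OF yz i1(2) d1] by blast
    from \<xi> \<eta> ivl have "\<xi> \<in> S" "\<eta> \<in> S" by auto
    with \<xi> \<eta> have fm: "f' \<eta> \<ge> f' \<xi>" by (intro mono) auto
    have "(f z - f x) * (y - z) = ((z - x) * (y - z)) * f' \<xi>" using \<xi>(3) by simp
    also have "\<dots> \<le> ((z - x) * (y - z)) * f' \<eta>"
      using fm xz yz by (intro mult_left_mono) simp_all
    also have "\<dots> = (f y - f z) * (z - x)" using \<eta>(3) by simp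
    finally have "(f y - f z) * (z - x) \<ge> (f z - f x) * (y - z)" .
    also have "z - x = t * (y - x)" by (simp add: z_def algebra_simps)
    also have "y - z = (1 - t) * (y - x)" by (simp add: z_def algebra_simps)
    finally have "(f y - f z) * t \<ge> (f z - f x) * (1 - t)"
      using xy by simp
    then show "f ((1 - t) *\<^sub>R x + t *\<^sub>R y) \<le> (1 - t) * f x + t * f y"
      by (simp add: z_def algebra_simps)
  qed
qed


lemma alg: fixes E q g :: real assumes "E > 0" "g > 0"
  shows "-(E*(-q/g))/(1+E)^2 = 1/(1+E) * (1 - 1/(1+E)) * q / g"
proof -
  have ne: "1 + E \<noteq> 0" using assms by simp
  have "1 - 1/(1+E) = E/(1+E)" using ne by (simp add: field_simps)
  then show ?thesis using ne assms by (simp add: field_simps power2_eq_square)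
qed

lemma alg2: fixes a b c g :: real
  shows "a * b + c * (b * (1 - b) * c / g) = b * (a + (1 / g) * (1 - b) * c^2)"
  by (simp add: algebra_simps power2_eq_square)

lemma conv_affine:
  fixes S :: "real set" and f :: "real \<Rightarrow> real"
  shows "convex_on S (\<lambda>x. f x - c - (x - s) * a) \<longleftrightarrow> convex_on S f"
proof -
  have e: "u * (f x - c - (x - s) * a) + v * (f y - c - (y - s) * a) - (f (u * x + v * y) - c - (u * x + v * y - s) * a)
     = u * f x + v * f y - f (u * x + v * y)" if "u + v = 1" for u v x y :: real
  proof -
    have u: "u = 1 - v" using that by simp
    show ?thesis unfolding u by (simp add: algebra_simps)
  qed
  have "(f (u * x + v * y) - c - (u * x + v * y - s) * a \<le> u * (f x - c - (x - s) * a) + v * (f y - c - (y - s) * a))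
     \<longleftrightarrow> f (u * x + v * y) \<le> u * f x + v * f y" if "u + v = 1" for u v x y :: real
    using e[OF that, of x y] by linarith
  then show ?thesis unfolding convex_on_def by auto
qed

theorem corollaryG1:
  fixes S :: "real set" and \<gamma> :: real and Q q q' H1 H2 :: "real \<Rightarrow> real"
  assumes S_int: "is_interval S"
    and S_nondeg: "\<exists>a\<in>S. \<exists>b\<in>S. a < b"
    and gamma_pos: "\<gamma> > 0"
    and Q_deriv: "\<And>z. z \<in> S \<Longrightarrow> (Q has_real_derivative q z) (at z within S)"
    and q_deriv: "\<And>z. z \<in> S \<Longrightarrow> (q has_real_derivative q' z) (at z within S)"
    and H_deriv1: "\<And>z. z \<in> S \<Longrightarrow> (softplusH \<gamma> Q has_real_derivative H1 z) (at z within S)"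
    and H_deriv2: "\<And>z. z \<in> S \<Longrightarrow> (H1 has_real_derivative H2 z) (at z within S)"
    and H2_cont: "continuous_on S H2"
  shows "(\<forall>s\<in>S. convex_on S (\<lambda>shat. matching_loss (softplusH \<gamma> Q) H1 shat s))
     \<longleftrightarrow> (\<forall>z\<in>S. q' z + (1 / \<gamma>) * (1 - sigmoidP \<gamma> Q z) * (q z)^2 \<ge> 0)"
proof -
  define p where "p = sigmoidP \<gamma> Q"
  have p_eq: "p z = exp (Q z / \<gamma>) / (1 + exp (Q z / \<gamma>))" for z
    unfolding p_def sigmoidP_def
    by (simp add: exp_minus field_simps)
  have p_pos: "p z > 0" for z unfolding p_eq by (simp add: add_pos_pos)
  have hd: "(softplusH \<gamma> Q has_real_derivative q z * p z) (at z within S)" if z: "z \<in> S" for z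
  proof -
    have "((\<lambda>z. \<gamma> * ln (1 + exp (Q z / \<gamma>))) has_real_derivative
        \<gamma> * ((exp (Q z / \<gamma>) * (q z / \<gamma>)) / (1 + exp (Q z / \<gamma>)))) (at z within S)"
    proof -
      have a: "((\<lambda>z. exp (Q z / \<gamma>)) has_real_derivative exp (Q z / \<gamma>) * (q z / \<gamma>)) (at z within S)"
        using DERIV_chain2[OF DERIV_exp DERIV_cdivide[OF Q_deriv[OF z]]] by simp
      have b: "((\<lambda>z. 1 + exp (Q z / \<gamma>)) has_real_derivative exp (Q z / \<gamma>) * (q z / \<gamma>)) (at z within S)"
        using DERIV_add[OF DERIV_const a] by simp
      have c: "((\<lambda>z. ln (1 + exp (Q z / \<gamma>))) has_real_derivative (exp (Q z / \<gamma>) * (q z / \<gamma>)) / (1 + exp (Q z / \<gamma>))) (at z within S)"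
        using DERIV_chain2[OF DERIV_ln b] by (simp add: add_pos_pos divide_inverse mult.commute)
      show ?thesis by (rule DERIV_cmult[OF c])
    qed
    moreover have "\<gamma> * ((exp (Q z / \<gamma>) * (q z / \<gamma>)) / (1 + exp (Q z / \<gamma>))) = q z * p z"
      using gamma_pos unfolding p_eq by simp
    ultimately show ?thesis unfolding softplusH_def[abs_def] by simp
  qed
  have H1_eq: "H1 z = q z * p z" if z: "z \<in> S" for z
    using has_field_derivative_unique[OF H_deriv1[OF z] hd[OF z] nontriv[OF S_int S_nondeg z]] .
  have pd: "(p has_real_derivative p z * (1 - p z) * q z / \<gamma>) (at z within S)" if z: "z \<in> S" for z
  proof -
    have "((\<lambda>z. 1 / (1 + exp (- Q z / \<gamma>))) has_real_derivative
        - (exp (- Q z / \<gamma>) * (- q z / \<gamma>)) / (1 + exp (- Q z / \<gamma>))^2) (at z within S)"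
    proof -
      have a: "((\<lambda>z. exp (- Q z / \<gamma>)) has_real_derivative exp (- Q z / \<gamma>) * (- q z / \<gamma>)) (at z within S)"
        using DERIV_chain2[OF DERIV_exp DERIV_cdivide[OF DERIV_minus[OF Q_deriv[OF z]]]] by simp
      have b: "((\<lambda>z. 1 + exp (- Q z / \<gamma>)) has_real_derivative exp (- Q z / \<gamma>) * (- q z / \<gamma>)) (at z within S)"
        using DERIV_add[OF DERIV_const a] by simp
      have ne: "1 + exp (- Q z / \<gamma>) \<noteq> 0" by (smt (verit) exp_gt_zero)
      show ?thesis using DERIV_inverse_fun[OF b ne] by (simp add: divide_inverse power2_eq_square)
    qed
    moreover have "- (exp (- Q z / \<gamma>) * (- q z / \<gamma>)) / (1 + exp (- Q z / \<gamma>))^2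
        = p z * (1 - p z) * q z / \<gamma>"
      using alg[of "exp (- Q z / \<gamma>)" \<gamma> "q z"] gamma_pos unfolding p_def sigmoidP_def
      by simp
    ultimately show ?thesis unfolding p_def sigmoidP_def[abs_def] by simp
  qed
  have H2_eq: "H2 z = p z * (q' z + (1 / \<gamma>) * (1 - p z) * (q z)^2)" if z: "z \<in> S" for z
  proof -
    have "((\<lambda>z. q z * p z) has_real_derivative q' z * p z + q z * (p z * (1 - p z) * q z / \<gamma>))
        (at z within S)"
      using DERIV_mult[OF q_deriv[OF z] pd[OF z]] by (simp add: mult_ac)
    then have "(H1 has_real_derivative q' z * p z + q z * (p z * (1 - p z) * q z / \<gamma>))
        (at z within S)"
      apply (subst has_field_derivative_cong_eventually[where g="\<lambda>z. q z * p z"])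
      using H1_eq z by (auto simp: eventually_at_filter)
    from has_field_derivative_unique[OF H_deriv2[OF z] this nontriv[OF S_int S_nondeg z]]
    show ?thesis using alg2 by simp
  qed
  have ci: "convex_on S (softplusH \<gamma> Q) \<longleftrightarrow> (\<forall>z\<in>S. H2 z \<ge> 0)"
    by (rule conv_iff[OF S_int S_nondeg H_deriv1 H_deriv2])
  have ne: "S \<noteq> {}" using S_nondeg by blast
  have lhs: "(\<forall>s\<in>S. convex_on S (\<lambda>shat. matching_loss (softplusH \<gamma> Q) H1 shat s))
      \<longleftrightarrow> convex_on S (softplusH \<gamma> Q)"
    unfolding matching_loss_def conv_affine using ne by blast
  have rhs: "H2 z \<ge> 0 \<longleftrightarrow> q' z + (1 / \<gamma>) * (1 - p z) * (q z)^2 \<ge> 0" if "z \<in> S" for z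
    unfolding H2_eq[OF that] using p_pos[of z] by (simp add: zero_le_mult_iff)
  show ?thesis unfolding lhs ci using rhs p_def by auto
qed

end
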